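(* Fix $K>0$, $t>0$, $\rho,\kappa_0,\theta\in\mathbb R$, and let $h(x)=\max\{e^x-K,0\}$. For $\tau>0$ and a function $f(x,\sigma)$ set $(e^{\tau L_0}f)(x,\sigma)=\int_{\mathbb R}\phi_\tau(x-y,\sigma)f(y,\sigma)\,dy$, where $$\phi_\tau(x,\sigma)=\frac{1}{\sigma\sqrt{2\pi\tau}}\exp\Big(-\tfrac12\Big(\tfrac{x}{\sigma\sqrt\tau}-\tfrac{\sigma\sqrt\tau}{2}\Big)^2\Big),$$ and $e^{0L_0}=\mathrm{id}$. With $L_1=\rho\sigma^2\partial_x\partial_\sigma+\kappa_0(\theta-\sigma)\partial_\sigma$ and $L_2=\frac12\sigma^2\partial_\sigma^2$, define $$F_1=\int_0^t e^{(t-\tau)L_0}L_1e^{\tau L_0}h\,d\tau,$$ $$F_2=\int_0^t e^{(t-\tau_1)L_0}L_2e^{\tau_1L_0}h\,d\tau_1+\int_0^t\!\!\int_0^{\tau_1}e^{(t-\tau_1)L_0}L_1e^{(\tau_1-\tau_2)L_0}L_1e^{\tau_2L_0}h\,d\tau_2\,d\tau_1,$$ as functions of $(x,\sigma)\in\mathbb R\times(0,\infty)$. Let $d_-=\frac{x-\ln K}{\sigma\sqrt t}-\frac{\sigma\sqrt t}{2}$, $N'(z)=(2\pi)^{-1/2}e^{-z^2/2}$, and let $H_n$ be the probabilists' Hermite polynomials $H_n(z)=(-1)^ne^{z^2/2}\partial_z^ne^{-z^2/2}$. Then $$F_1=\frac{Kt}{2}\big(\kappa_0(\theta-\sigma)\sqrt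 t-\rho\sigma d_-\big)N'(d_-),$$ and $$F_2=K\sum_{i=0}^4 a_{2i}\Big(-\frac{1}{\sigma\sqrt t}\Big)^iH_i(d_-)\,\frac{N'(d_-)}{\sigma\sqrt t},$$ where $a_{20}=\frac{t^2\sigma^2}{4}+\frac{t^3\kappa_0^2}{6}(\theta-\sigma)(\theta-2\sigma)$, $a_{21}=-\frac{t^3\sigma^4}{6}+\frac{t^3\kappa_0\rho\sigma^2}{6}(4\theta-5\sigma)-\frac{t^4\kappa_0^2\sigma^2}{8}(\theta-\sigma)^2$, $a_{22}=\frac{t^3\sigma^4}{6}+\frac{t^3\rho^2\sigma^4}{2}+\frac{t^4\kappa_0^2\sigma^2}{8}(\theta-\sigma)^2-\frac{t^4\kappa_0\rho\sigma^4}{4}(\theta-\sigma)$, $a_{23}=\frac{t^4\kappa_0\rho\sigma^4}{4}(\theta-\sigma)-\frac{t^4\rho^2\sigma^6}{8}$, $a_{24}=\frac{t^4\rho^2\sigma^6}{8}$.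
   Context: These are the coefficients of $\nu$ and $\nu^2$ in the Duhamel–Dyson expansion of the solution of the $\lambda$SABR equation $\partial_t u=\sigma^2[\frac12(\partial_x^2u-\partial_xu)+\nu\rho\partial_x\partial_\sigma u+\frac12\nu^2\partial_\sigma^2u]+\nu\kappa_0(\theta-\sigma)\partial_\sigma u$, $u(0)=h$, whose generator is $L_0+\nu L_1+\nu^2L_2$ with $L_0=\frac12\sigma^2(\partial_x^2-\partial_x)$; the operator $e^{\tau L_0}$ is the heat semigroup of $L_0$ (convolution in $x$ with $\sigma$ as parameter). *)

theory Defs
  imports "HOL-Analysis.Analysis"
begin

text \<open>Functions of (x, sigma) are represented as curried maps real => real => real.\<close>

definition call_payoff :: "real \<Rightarrow> real \<Rightarrow> real \<Rightarrow> real" where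
  "call_payoff K x \<sigma> = max (exp x - K) 0"

definition heat_kernel :: "real \<Rightarrow> real \<Rightarrow> real \<Rightarrow> real" where
  "heat_kernel \<tau> x \<sigma> =
     1 / (\<sigma> * sqrt (2 * pi * \<tau>)) *
     exp (- (1/2) * (x / (\<sigma> * sqrt \<tau>) - \<sigma> * sqrt \<tau> / 2)^2)"

definition heat_sg :: "real \<Rightarrow> (real \<Rightarrow> real \<Rightarrow> real) \<Rightarrow> real \<Rightarrow> real \<Rightarrow> real" where
  "heat_sg \<tau> f x \<sigma> =
     (if \<tau> = 0 then f x \<sigma>
      else (\<integral>y. heat_kernel \<tau> (x - y) \<sigma> * f y \<sigma> \<partial>lborel))"

definition d_x :: "(real \<Rightarrow> real \<Rightarrow> real) \<Rightarrow> real \<Rightarrow> real \<Rightarrow> real" where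
  "d_x f x \<sigma> = deriv (\<lambda>x'. f x' \<sigma>) x"

definition d_sig :: "(real \<Rightarrow> real \<Rightarrow> real) \<Rightarrow> real \<Rightarrow> real \<Rightarrow> real" where
  "d_sig f x \<sigma> = deriv (\<lambda>s. f x s) \<sigma>"

definition L1_op :: "real \<Rightarrow> real \<Rightarrow> real \<Rightarrow> (real \<Rightarrow> real \<Rightarrow> real) \<Rightarrow> real \<Rightarrow> real \<Rightarrow> real" where
  "L1_op \<rho> \<kappa>0 \<theta> f x \<sigma> =
     \<rho> * \<sigma>^2 * d_x (d_sig f) x \<sigma> + \<kappa>0 * (\<theta> - \<sigma>) * d_sig f x \<sigma>"

definition L2_op :: "(real \<Rightarrow> real \<Rightarrow> real) \<Rightarrow> real \<Rightarrow> real \<Rightarrow> real" where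
  "L2_op f x \<sigma> = 1/2 * \<sigma>^2 * d_sig (d_sig f) x \<sigma>"

definition F1 :: "real \<Rightarrow> real \<Rightarrow> real \<Rightarrow> real \<Rightarrow> real \<Rightarrow> real \<Rightarrow> real \<Rightarrow> real" where
  "F1 K t \<rho> \<kappa>0 \<theta> x \<sigma> =
     integral {0..t} (\<lambda>\<tau>. heat_sg (t - \<tau>) (L1_op \<rho> \<kappa>0 \<theta> (heat_sg \<tau> (call_payoff K))) x \<sigma>)"

definition F2 :: "real \<Rightarrow> real \<Rightarrow> real \<Rightarrow> real \<Rightarrow> real \<Rightarrow> real \<Rightarrow> real \<Rightarrow> real" where
  "F2 K t \<rho> \<kappa>0 \<theta> x \<sigma> =
     integral {0..t} (\<lambda>\<tau>1. heat_sg (t - \<tau>1) (L2_op (heat_sg \<tau>1 (call_payoff K))) x \<sigma>)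
   + integral {0..t} (\<lambda>\<tau>1. integral {0..\<tau>1} (\<lambda>\<tau>2.
        heat_sg (t - \<tau>1)
          (L1_op \<rho> \<kappa>0 \<theta> (heat_sg (\<tau>1 - \<tau>2)
             (L1_op \<rho> \<kappa>0 \<theta> (heat_sg \<tau>2 (call_payoff K))))) x \<sigma>))"

definition Nprime :: "real \<Rightarrow> real" where
  "Nprime z = exp (- (z^2) / 2) / sqrt (2 * pi)"

definition hermite :: "nat \<Rightarrow> real \<Rightarrow> real" where
  "hermite n z = (-1)^n * exp (z^2 / 2) * ((deriv ^^ n) (\<lambda>u. exp (- (u^2) / 2)) z)"

definition d_minus :: "real \<Rightarrow> real \<Rightarrow> real \<Rightarrow> real \<Rightarrow> real" where
  "d_minus K t x \<sigma> = (x - ln K) / (\<sigma> * sqrt t) - \<sigma> * sqrt t / 2"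

definition a2 :: "real \<Rightarrow> real \<Rightarrow> real \<Rightarrow> real \<Rightarrow> real \<Rightarrow> nat \<Rightarrow> real" where
  "a2 t \<rho> \<kappa>0 \<theta> \<sigma> i =
    (if i = 0 then t^2 * \<sigma>^2 / 4 + t^3 * \<kappa>0^2 / 6 * (\<theta> - \<sigma>) * (\<theta> - 2 * \<sigma>)
     else if i = 1 then - (t^3 * \<sigma>^4 / 6) + t^3 * \<kappa>0 * \<rho> * \<sigma>^2 / 6 * (4 * \<theta> - 5 * \<sigma>)
                        - t^4 * \<kappa>0^2 * \<sigma>^2 / 8 * (\<theta> - \<sigma>)^2
     else if i = 2 then t^3 * \<sigma>^4 / 6 + t^3 * \<rho>^2 * \<sigma>^4 / 2 + t^4 * \<kappa>0^2 * \<sigma>^2 / 8 * (\<theta> - \<sigma>)^2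
                        - t^4 * \<kappa>0 * \<rho> * \<sigma>^4 / 4 * (\<theta> - \<sigma>)
     else if i = 3 then t^4 * \<kappa>0 * \<rho> * \<sigma>^4 / 4 * (\<theta> - \<sigma>) - t^4 * \<rho>^2 * \<sigma>^6 / 8
     else if i = 4 then t^4 * \<rho>^2 * \<sigma>^6 / 8
     else 0)"

end

theory Submission
  imports Defs "HOL-Probability.Distributions"
begin


lemma Nprime_std: "Nprime z = std_normal_density z"
  by (simp add: Nprime_def std_normal_density_def)

lemma integrable_Nprime: "integrable lborel Nprime"
  unfolding Nprime_std[abs_def] by simp

lemma cont_Nprime: "continuous_on A Nprime"
  unfolding Nprime_def by (intro continuous_intros) auto

lemma ii_Nprime: "interval_lebesgue_integrable lborel a b Nprime"
  unfolding interval_lebesgue_integrable_def set_integrable_def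
  using integrable_Nprime
  using integrable_mult_indicator[of "einterval a b" lborel Nprime]
    integrable_mult_indicator[of "einterval b a" lborel Nprime]
  by (auto simp: borel_open)

definition Psi :: "real \<Rightarrow> real" where
  "Psi w = (LBINT z=ereal w..\<infinity>. Nprime z)"

lemma Psi_split: "Psi w = Psi 0 - (LBINT z=ereal 0..ereal w. Nprime z)"
proof -
  have "(LBINT z=ereal w..ereal 0. Nprime z) + (LBINT z=ereal 0..\<infinity>. Nprime z) = (LBINT z=ereal w..\<infinity>. Nprime z)"
    by (rule interval_integral_sum) (rule ii_Nprime)
  moreover have "(LBINT z=ereal w..ereal 0. Nprime z) = - (LBINT z=ereal 0..ereal w. Nprime z)"
    by (rule interval_integral_endpoints_reverse)
  ultimately show ?thesis unfolding Psi_def by (simp add: zero_ereal_def)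
qed

lemma Gint_deriv: "((\<lambda>w. LBINT z=ereal 0..ereal w. Nprime z) has_real_derivative Nprime w) (at w)"
proof -
  define a where "a = min w 0 - 1"
  define b where "b = max w 0 + 1"
  have "((\<lambda>u. LBINT y=ereal 0..ereal u. Nprime y) has_vector_derivative (Nprime w)) (at w within {a..b})"
    by (rule interval_integral_FTC2) (auto simp: a_def b_def intro: cont_Nprime)
  moreover have "at w within {a..b} = at w"
    by (rule at_within_Icc_at) (auto simp: a_def b_def)
  ultimately show ?thesis by (simp add: has_real_derivative_iff_has_vector_derivative)
qed

lemma Psi_deriv: "(Psi has_real_derivative - Nprime w) (at w)"
proof -
  have "((\<lambda>w. Psi 0 - (LBINT z=ereal 0..ereal w. Nprime z)) has_real_derivative 0 - Nprime w) (at w)"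
    by (intro derivative_intros Gint_deriv)
  then show ?thesis by (subst Psi_split[abs_def]) simp
qed



lemma hk_sub:
  assumes "s > 0" "\<tau> > 0"
  shows "s * sqrt \<tau> * heat_kernel \<tau> ((s * sqrt \<tau>)^2/2 - s * sqrt \<tau> * z) s = Nprime z"
proof -
  let ?q = "s * sqrt \<tau>"
  have q: "?q > 0" using assms by simp
  have e0: "\<And>q::real. q > 0 \<Longrightarrow> ((q^2/2 - q * z) / q - q / 2) = - z" by (simp add: field_simps power2_eq_square)
  have e: "((?q^2/2 - ?q * z) / ?q - ?q / 2) = - z" using e0[OF q] .
  have sq: "sqrt (2 * pi * \<tau>) = sqrt (2*pi) * sqrt \<tau>" by (simp add: real_sqrt_mult)
  show ?thesis unfolding heat_kernel_def Nprime_def e sq using q assms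
    by (simp add: field_simps)
qed

lemma Psi_alt: "Psi w = (\<integral>z. indicator {w<..} z * Nprime z \<partial>lborel)"
  unfolding Psi_def interval_lebesgue_integral_def set_lebesgue_integral_def by simp

lemma heat_payoff:
  fixes x K s \<tau> :: real
  assumes K: "K > 0" and s: "s > 0" and tau: "\<tau> > 0"
  defines "q \<equiv> s * sqrt \<tau>"
  defines "dm \<equiv> (x - ln K) / q - q / 2"
  shows "heat_sg \<tau> (call_payoff K) x s = exp x * Psi (- (dm + q)) - K * Psi (- dm)"
proof -
  have q: "q > 0" using s tau by (simp add: q_def)
  define t0 where "t0 = x - q^2/2"
  define A where "A = {- dm<..}"
  have "heat_sg \<tau> (call_payoff K) x s = (\<integral>y. heat_kernel \<tau> (x - y) s * max (exp y - K) 0 \<partial>lborel)"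
    using tau by (simp add: heat_sg_def call_payoff_def)
  also have "\<dots> = \<bar>q\<bar> *\<^sub>R (\<integral>z. heat_kernel \<tau> (x - (t0 + q * z)) s * max (exp (t0 + q * z) - K) 0 \<partial>lborel)"
    by (rule lborel_integral_real_affine) (use q in simp)
  also have "\<dots> = (\<integral>z. indicator A z * (exp x * Nprime (z - q) - K * Nprime z) \<partial>lborel)"
  proof -
    have "q * (heat_kernel \<tau> (x - (t0 + q * z)) s * max (exp (t0 + q * z) - K) 0)
          = indicator A z * (exp x * Nprime (z - q) - K * Nprime z)" for z
    proof -
      have xe: "x - (t0 + q * z) = q^2/2 - q * z" by (simp add: t0_def)
      have h: "q * heat_kernel \<tau> (x - (t0 + q * z)) s = Nprime z"
        unfolding xe using hk_sub[OF s tau, of z] by (simp add: q_def)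
      have ex: "Nprime z * exp (t0 + q * z) = exp x * Nprime (z - q)"
      proof -
        have "exp (- (z^2) / 2) * exp (t0 + q * z) = exp x * exp (- ((z - q)^2) / 2)"
          unfolding mult_exp_exp t0_def by (rule arg_cong[where f=exp]) (simp add: power2_eq_square field_simps)
        then show ?thesis unfolding Nprime_def by (simp add: field_simps)
      qed
      have iff: "exp (t0 + q * z) - K > 0 \<longleftrightarrow> z \<in> A"
      proof -
        have "exp (t0 + q * z) - K > 0 \<longleftrightarrow> ln K < t0 + q * z"
          using K by (metis diff_gt_0_iff_gt exp_less_cancel_iff exp_ln)
        also have "\<dots> \<longleftrightarrow> - dm < z"
          using q unfolding dm_def t0_def by (simp add: field_simps power2_eq_square)
        finally show ?thesis by (simp add: A_def)
      qed
      show ?thesis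
      proof (cases "z \<in> A")
        case True
        then show ?thesis using iff h ex
          by (simp add: algebra_simps)
             (metis (no_types, lifting) ex mult.assoc mult.commute)
      next
        case False
        then show ?thesis using iff by simp
      qed
    qed
    then show ?thesis using q by (simp add: integral_mult_right_zero[symmetric])
  qed
  also have "\<dots> = exp x * (\<integral>z. indicator A z * Nprime (z - q) \<partial>lborel) - K * (\<integral>z. indicator A z * Nprime z \<partial>lborel)"
  proof -
    have i1: "integrable lborel (\<lambda>z. Nprime (z - q))"
      using lborel_integrable_real_affine[OF integrable_Nprime, of 1 "-q"] by simp
    have i1': "integrable lborel (\<lambda>z. indicator A z * Nprime (z - q))"
      using integrable_mult_indicator[OF _ i1, of A] by (simp add: A_def)
    have i2': "integrable lborel (\<lambda>z. indicator A z * Nprime z)"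
      using integrable_mult_indicator[OF _ integrable_Nprime, of A] by (simp add: A_def)
    show ?thesis
      using i1' i2' by (simp add: algebra_simps)
  qed
  also have "(\<integral>z. indicator A z * Nprime (z - q) \<partial>lborel) = Psi (- (dm + q))"
  proof -
    have "(\<integral>z. indicator A z * Nprime (z - q) \<partial>lborel) = \<bar>1\<bar> *\<^sub>R (\<integral>z. indicator A (q + 1 * z) * Nprime ((q + 1 * z) - q) \<partial>lborel)"
      by (rule lborel_integral_real_affine) simp
    also have "\<dots> = (\<integral>z. indicator {- (dm + q)<..} z * Nprime z \<partial>lborel)"
      by (simp, rule Bochner_Integration.integral_cong) (auto simp: A_def indicator_def)
    finally show ?thesis by (simp add: Psi_alt)
  qed
  also have "(\<integral>z. indicator A z * Nprime z \<partial>lborel) = Psi (- dm)"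
    by (simp add: Psi_alt A_def)
  finally show ?thesis .
qed



lemma Psi_chain[derivative_intros]:
  "(f has_real_derivative f') (at x within S) \<Longrightarrow> ((\<lambda>x. Psi (f x)) has_real_derivative (- Nprime (f x) * f')) (at x within S)"
  by (rule DERIV_chain2[OF Psi_deriv])

lemma hk_Nprime:
  assumes "s > 0" "\<tau> > 0"
  shows "heat_kernel \<tau> z s = Nprime (z / (s * sqrt \<tau>) - s * sqrt \<tau> / 2) / (s * sqrt \<tau>)"
proof -
  have sq: "sqrt (2 * pi * \<tau>) = sqrt (2*pi) * sqrt \<tau>" by (simp add: real_sqrt_mult)
  show ?thesis unfolding heat_kernel_def Nprime_def sq using assms by (simp add: field_simps)
qed

lemma heat_payoff_deriv:
  fixes x K s \<tau> :: real
  assumes K: "K > 0" and s: "s > 0" and tau: "\<tau> > 0"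
  shows "((\<lambda>s'. heat_sg \<tau> (call_payoff K) x s') has_real_derivative
           s * \<tau> * K * heat_kernel \<tau> (x - ln K) s) (at s)"
proof -
  define a where "a = x - ln K"
  define r where "r = sqrt \<tau>"
  have r: "r > 0" "r^2 = \<tau>" using tau by (auto simp: r_def)
  define dm where "dm = (\<lambda>s. a / (s * r) - s * r / 2)"
  define CF where "CF = (\<lambda>s. exp x * Psi (- (dm s + s * r)) - K * Psi (- dm s))"
  have eq: "\<And>s'. s' \<in> {0<..} \<Longrightarrow> CF s' = heat_sg \<tau> (call_payoff K) x s'"
    using heat_payoff[OF K _ tau] by (simp add: CF_def dm_def a_def r_def)
  have d: "(CF has_real_derivative
      (exp x * (- Nprime (- (dm s + s * r)) * (- ((- a * r / (s * r)^2 - r/2) + r)))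
       - K * (- Nprime (- dm s) * (- (- a * r / (s * r)^2 - r/2))))) (at s)"
    unfolding CF_def dm_def using s r
    by (auto intro!: derivative_eq_intros simp: power2_eq_square field_simps)
  have N: "Nprime (- y) = Nprime y" for y unfolding Nprime_def by simp
  have key: "exp x * Nprime (- (dm s + s * r)) = K * Nprime (dm s)"
  proof -
    have "x - ((dm s + s * r)^2) / 2 = ln K - ((dm s)^2) / 2"
      using s r by (simp add: dm_def a_def power2_eq_square field_simps)
    then have "exp x * exp (- ((dm s + s * r)^2) / 2) = K * exp (- ((dm s)^2) / 2)"
      using K by (metis (no_types, opaque_lifting) exp_add exp_ln diff_conv_add_uminus minus_divide_left)
    then show ?thesis unfolding N unfolding Nprime_def by (simp add: power2_eq_square)
  qed
  have val: "(exp x * (- Nprime (- (dm s + s * r)) * (- ((- a * r / (s * r)^2 - r/2) + r)))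
       - K * (- Nprime (- dm s) * (- (- a * r / (s * r)^2 - r/2)))) = s * \<tau> * K * heat_kernel \<tau> (x - ln K) s"
  proof -
    have "exp x * (- Nprime (- (dm s + s * r)) * (- ((- a * r / (s * r)^2 - r/2) + r)))
       - K * (- Nprime (- dm s) * (- (- a * r / (s * r)^2 - r/2)))
       = (exp x * Nprime (- (dm s + s * r))) * ((- a * r / (s * r)^2 - r/2) + r)
         - K * Nprime (dm s) * (- a * r / (s * r)^2 - r/2)" by (simp add: N algebra_simps)
    also have "\<dots> = K * Nprime (dm s) * r" unfolding key by (simp add: algebra_simps)
    also have "\<dots> = s * \<tau> * K * heat_kernel \<tau> (x - ln K) s"
    proof -
      have hk: "heat_kernel \<tau> (x - ln K) s = Nprime (dm s) / (s * r)"
        using hk_Nprime[OF s tau, of "x - ln K"] by (simp add: dm_def a_def r_def)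
      have tr: "\<tau> = r * r" using r by (simp add: power2_eq_square)
      show ?thesis unfolding hk unfolding tr using s r by (simp add: field_simps)
    qed
    finally show ?thesis .
  qed
  show ?thesis
    by (rule has_field_derivative_transform_within_open[OF d[unfolded val], of "{0<..}"]) (use s eq in auto)
qed



fun he :: "nat \<Rightarrow> real \<Rightarrow> real" where
  "he 0 d = 1"
| "he (Suc 0) d = d"
| "he (Suc (Suc 0)) d = d^2 - 1"
| "he (Suc (Suc (Suc 0))) d = d^3 - 3*d"
| "he (Suc (Suc (Suc (Suc 0)))) d = d^4 - 6*d^2 + 3"
| "he _ d = 0"

lemma he_num[simp]: "he 2 d = d^2 - 1" "he 3 d = d^3 - 3*d" "he 4 d = d^4 - 6*d^2 + 3"
  by (simp_all add: numeral_eq_Suc)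

lemma mom: "has_bochner_integral lborel (\<lambda>z. Nprime z * z^j) (if j = 0 then 1 else if j = 2 then 1 else if j = 4 then 3 else 0)"
  if "j \<le> 4"
proof -
  have E: "has_bochner_integral lborel (\<lambda>z. Nprime z * z^(2*k)) (fact (2 * k) / (2^k * fact k))" for k
    using std_normal_moment_even[of k] by (simp add: Nprime_std[abs_def])
  have O: "has_bochner_integral lborel (\<lambda>z. Nprime z * z^(2*k+1)) 0" for k
    using std_normal_moment_odd[of k] by (simp add: Nprime_std[abs_def])
  from that have "j \<in> {0,1,2,3,4}" by auto
  then show ?thesis
  proof (elim insertE)
    assume "j = 0" then show ?thesis using E[of 0] by simp
  next
    assume "j = 1" then show ?thesis using O[of 0] by simp
  next
    assume "j = 2" then show ?thesis using E[of 1] by simp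
  next
    assume "j = 3" then show ?thesis using O[of 1] by (simp add: numeral_3_eq_3)
  next
    assume "j \<in> {}" then show ?thesis by simp
  next
    assume "j = 4" then show ?thesis using E[of 2] by (simp add: fact_numeral)
  qed
qed

lemma moment_poly:
  assumes "\<And>z. g z = Nprime z * (ca + cb*z + cc*z^2 + cd*z^3 + ce*z^4)"
    and "v = ca + cc + 3*ce"
  shows "has_bochner_integral lborel g v"
proof -
  have "has_bochner_integral lborel (\<lambda>z. ca * (Nprime z * z^0) + cb * (Nprime z * z^1) + cc * (Nprime z * z^2)
     + cd * (Nprime z * z^3) + ce * (Nprime z * z^4)) (ca * 1 + cb * 0 + cc * 1 + cd * 0 + ce * 3)"
    by (intro has_bochner_integral_add has_bochner_integral_mult_right)
       (use mom[of 0] mom[of 1] mom[of 2] mom[of 3] mom[of 4] in auto)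
  moreover have "(\<lambda>z. ca * (Nprime z * z^0) + cb * (Nprime z * z^1) + cc * (Nprime z * z^2)
     + cd * (Nprime z * z^3) + ce * (Nprime z * z^4)) = g"
    by (rule ext) (simp add: assms algebra_simps)
  ultimately show ?thesis using assms(2) by (simp add: mult.commute)
qed

lemma he_moment:
  assumes "k \<le> 4" "\<alpha>^2 + \<beta>^2 = 1"
  shows "has_bochner_integral lborel (\<lambda>z. Nprime z * he k (\<alpha>*d + \<beta>*z)) (\<alpha>^k * he k d)"
proof -
  have b: "\<beta>^2 = 1 - \<alpha>^2" using assms by simp
  have b4: "\<beta>^4 = (1 - \<alpha>^2)^2" by (simp add: b[symmetric] flip: power_mult)
  from assms(1) have "k \<in> {0,1,2,3,4}" by auto
  then show ?thesis
  proof (elim insertE)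
    assume "k = 0" then show ?thesis
      by (intro moment_poly[where ca=1 and cb=0 and cc=0 and cd=0 and ce=0]) auto
  next
    assume "k = 1" then show ?thesis
      by (intro moment_poly[where ca="\<alpha>*d" and cb=\<beta> and cc=0 and cd=0 and ce=0]) (auto simp: algebra_simps)
  next
    assume k: "k = 2" show ?thesis unfolding k
      apply (intro moment_poly[where ca="\<alpha>^2*d^2 - 1" and cb="2*\<alpha>*\<beta>*d" and cc="\<beta>^2" and cd=0 and ce=0])
       apply (simp add: algebra_simps power2_eq_square)
      apply (simp add: b algebra_simps)
      done
  next
    assume k: "k = 3" show ?thesis unfolding k
      apply (intro moment_poly[where ca="\<alpha>^3*d^3 - 3*\<alpha>*d" and cb="3*\<alpha>^2*\<beta>*d^2 - 3*\<beta>" and cc="3*\<alpha>*\<beta>^2*d" and cd="\<beta>^3" and ce=0])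
       apply (simp add: algebra_simps power2_eq_square power3_eq_cube)
      apply (simp only: b)
      apply (simp add: algebra_simps power2_eq_square power3_eq_cube)
      done
  next
    assume k: "k = 4"
    show ?thesis unfolding k
      apply (intro moment_poly[where ca="\<alpha>^4*d^4 - 6*\<alpha>^2*d^2 + 3" and cb="4*\<alpha>^3*\<beta>*d^3 - 12*\<alpha>*\<beta>*d"
              and cc="6*\<alpha>^2*\<beta>^2*d^2 - 6*\<beta>^2" and cd="4*\<alpha>*\<beta>^3*d" and ce="\<beta>^4"])
       apply (simp add: algebra_simps power2_eq_square power3_eq_cube power4_eq_xxxx)
      apply (simp only: b b4)
      apply (simp add: power4_eq_xxxx algebra_simps power2_eq_square)
      done
  next
    assume "k \<in> {}" then show ?thesis by simp
  qed
qed



definition psi :: "nat \<Rightarrow> real \<Rightarrow> real \<Rightarrow> real \<Rightarrow> real" where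
  "psi k \<tau> z s = (-1/(s * sqrt \<tau>))^k * he k (z/(s * sqrt \<tau>) - s * sqrt \<tau>/2) * heat_kernel \<tau> z s"

lemma N_pair:
  assumes "\<alpha>^2 + \<beta>^2 = 1"
  shows "Nprime (\<beta>*d - \<alpha>*z) * Nprime (\<alpha>*d + \<beta>*z) = Nprime d * Nprime z"
proof -
  have "(\<beta>*d - \<alpha>*z)^2 + (\<alpha>*d + \<beta>*z)^2 = (\<alpha>^2 + \<beta>^2) * (d^2 + z^2)"
    by (simp add: power2_eq_square algebra_simps)
  then have e: "(\<beta>*d - \<alpha>*z)^2 + (\<alpha>*d + \<beta>*z)^2 = d^2 + z^2" using assms by simp
  have "exp (- ((\<beta>*d - \<alpha>*z)^2) / 2) * exp (- ((\<alpha>*d + \<beta>*z)^2) / 2) = exp (- (d^2)/2) * exp (- (z^2)/2)"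
    unfolding mult_exp_exp by (rule arg_cong[where f=exp]) (use e in \<open>simp add: field_simps\<close>)
  then show ?thesis unfolding Nprime_def by simp
qed

lemma shift_alg:
  fixes p q r D z :: real
  assumes "p > 0" "q > 0" "r > 0" "r^2 = p^2 + q^2"
  shows "(D - (q * (q/r) * (D/r - r/2) + q^2/2 + q*p/r*z)) / p - p/2 = (p/r) * (D/r - r/2) - (q/r) * z"
proof -
  have h: "r*r = p*p + q*q" using assms(4) by (simp add: power2_eq_square)
  show ?thesis using assms(1-3)
    apply (simp add: field_simps)
    using h by algebra
qed

lemma conv:
  fixes u \<tau> \<sigma> x a :: real
  assumes k: "k \<le> 4" and u: "u > 0" and tau: "\<tau> > 0" and sg: "\<sigma> > 0"
  shows "has_bochner_integral lborel (\<lambda>y. heat_kernel u (x - y) \<sigma> * psi k \<tau> (y - a) \<sigma>)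
           (psi k (u + \<tau>) (x - a) \<sigma>)"
proof -
  define p where "p = \<sigma> * sqrt u"
  define q where "q = \<sigma> * sqrt \<tau>"
  define r where "r = \<sigma> * sqrt (u + \<tau>)"
  have pos: "p > 0" "q > 0" "r > 0" using u tau sg by (auto simp: p_def q_def r_def)
  have rr: "r^2 = p^2 + q^2" using u tau sg by (simp add: p_def q_def r_def power_mult_distrib algebra_simps)
  define D where "D = x - a"
  define d where "d = D/r - r/2"
  define \<alpha> where "\<alpha> = q/r"
  define \<beta> where "\<beta> = p/r"
  have ab: "\<alpha>^2 + \<beta>^2 = 1"
  proof -
    have "\<alpha>^2 + \<beta>^2 = (q^2 + p^2) / r^2" by (simp add: \<alpha>_def \<beta>_def power_divide add_divide_distrib)
    also have "\<dots> = 1" using rr pos by simp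
    finally show ?thesis .
  qed
  define c where "c = q * p / r"
  have c: "c > 0" using pos by (simp add: c_def)
  define t0 where "t0 = a + q * \<alpha> * d + q^2/2"
  define M where "M = (-1/q)^k * Nprime d / (p * q)"
  have pw: "heat_kernel u (x - (t0 + c * z)) \<sigma> * psi k \<tau> (t0 + c * z - a) \<sigma>
          = M * (Nprime z * he k (\<alpha>*d + \<beta>*z))" for z
  proof -
    have h1: "heat_kernel u (x - (t0 + c * z)) \<sigma> = Nprime (\<beta>*d - \<alpha>*z) / p"
    proof -
      have "(x - (t0 + c * z)) / p - p / 2 = \<beta>*d - \<alpha>*z"
        using shift_alg[OF pos rr, of D z]
        by (simp add: t0_def c_def D_def d_def \<alpha>_def \<beta>_def algebra_simps)
      then show ?thesis using hk_Nprime[OF sg u, of "x - (t0 + c * z)"] by (simp add: p_def)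
    qed
    have e2: "(t0 + c * z - a) / q - q / 2 = \<alpha>*d + \<beta>*z"
      using pos by (simp add: t0_def c_def \<alpha>_def \<beta>_def field_simps power2_eq_square)
    have h2: "heat_kernel \<tau> (t0 + c * z - a) \<sigma> = Nprime (\<alpha>*d + \<beta>*z) / q"
      using hk_Nprime[OF sg tau, of "t0 + c * z - a"] e2 by (simp add: q_def)
    have h3: "psi k \<tau> (t0 + c * z - a) \<sigma> = (-1/q)^k * he k (\<alpha>*d + \<beta>*z) * (Nprime (\<alpha>*d + \<beta>*z) / q)"
      unfolding psi_def h2 using e2 by (simp add: q_def)
    show ?thesis unfolding h1 h3 M_def using N_pair[OF ab, of d z] pos
      by (simp add: field_simps)
  qed
  have I: "has_bochner_integral lborel (\<lambda>z. heat_kernel u (x - (t0 + c * z)) \<sigma> * psi k \<tau> (t0 + c * z - a) \<sigma>)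
             (M * (\<alpha>^k * he k d))"
    unfolding pw by (rule has_bochner_integral_mult_right[OF he_moment[OF k ab]])
  have val: "M * (\<alpha>^k * he k d) = psi k (u + \<tau>) (x - a) \<sigma> /\<^sub>R \<bar>c\<bar>"
  proof -
    have hk: "heat_kernel (u+\<tau>) (x - a) \<sigma> = Nprime d / r"
      using hk_Nprime[OF sg, of "u+\<tau>" "x - a"] u tau by (simp add: d_def D_def r_def)
    have ps: "psi k (u + \<tau>) (x - a) \<sigma> = (-1/r)^k * he k d * (Nprime d / r)"
      unfolding psi_def hk by (simp add: r_def d_def D_def)
    have "(-1/q)^k * \<alpha>^k = (-1/r)^k" using pos by (simp add: \<alpha>_def power_mult_distrib[symmetric])
    then show ?thesis unfolding ps M_def using c pos
      by (simp add: c_def field_simps)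
  qed
  show ?thesis
    using I unfolding val
    by (subst lborel_has_bochner_integral_real_affine_iff[where c=c and t=t0]) (use c in auto)
qed



lemma Nprime_deriv[derivative_intros]:
  "(f has_real_derivative f') (at x within S) \<Longrightarrow>
   ((\<lambda>x. Nprime (f x)) has_real_derivative (- f x * Nprime (f x) * f')) (at x within S)"
  unfolding Nprime_def
  by (auto intro!: derivative_eq_intros simp: power2_eq_square field_simps)

lemma he_N_deriv:
  assumes "k \<le> 3"
  shows "((\<lambda>d. he k d * Nprime d) has_real_derivative (- (he (Suc k) d * Nprime d))) (at d)"
proof -
  from assms have "k \<in> {0,1,2,3}" by auto
  then show ?thesis
    by (elim insertE) (auto intro!: derivative_eq_intros simp: numeral_eq_Suc power2_eq_square power3_eq_cube power4_eq_xxxx algebra_simps)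
qed

lemma he_rec:
  "k \<le> 2 \<Longrightarrow> he (Suc (Suc k)) d = d * he (Suc k) d - real (Suc k) * he k d"
proof -
  assume "k \<le> 2"
  then have "k \<in> {0,1,2}" by auto
  then show ?thesis
    by (elim insertE) (auto simp: numeral_eq_Suc power2_eq_square power3_eq_cube power4_eq_xxxx algebra_simps)
qed

definition dd :: "real \<Rightarrow> real \<Rightarrow> real \<Rightarrow> real" where
  "dd \<tau> z s = z / (s * sqrt \<tau>) - s * sqrt \<tau> / 2"

definition G :: "nat \<Rightarrow> real \<Rightarrow> real" where
  "G k d = he k d * Nprime d"

lemma G_deriv:
  "k \<le> 3 \<Longrightarrow> (f has_real_derivative f') (at x) \<Longrightarrow> D = - G (Suc k) (f x) * f' \<Longrightarrow>
   ((\<lambda>x. G k (f x)) has_real_derivative D) (at x)"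
  unfolding G_def using DERIV_chain2[OF he_N_deriv] by auto

lemma psiG:
  assumes "s > 0" "\<tau> > 0"
  shows "psi k \<tau> z s = (-1/(s * sqrt \<tau>))^k * G k (dd \<tau> z s) / (s * sqrt \<tau>)"
  unfolding psi_def hk_Nprime[OF assms] G_def dd_def by simp

lemma psi_dx:
  assumes k: "k \<le> 3" and s: "s > 0" and tau: "\<tau> > 0"
  shows "((\<lambda>z. psi k \<tau> z s) has_real_derivative psi (Suc k) \<tau> z s) (at z)"
proof -
  define q where "q = s * sqrt \<tau>"
  have q: "q > 0" using s tau by (simp add: q_def)
  have eq: "(\<lambda>z. psi k \<tau> z s) = (\<lambda>z. (-1/q)^k * G k (z / q - q/2) / q)"
    using psiG[OF s tau] by (simp add: q_def dd_def)
  have "((\<lambda>z. (-1/q)^k * G k (z / q - q/2) / q) has_real_derivative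
         (-1/q)^k * (- G (Suc k) (z / q - q/2) * (1 / q - 0)) / q) (at z)"
    using q by (auto intro!: derivative_eq_intros G_deriv k)
  moreover have "(-1/q)^k * (- G (Suc k) (z / q - q/2) * (1 / q - 0)) / q = psi (Suc k) \<tau> z s"
    using psiG[OF s tau, of "Suc k" z] q by (simp add: q_def dd_def field_simps)
  ultimately show ?thesis unfolding eq by simp
qed

lemma psi_ds:
  assumes k: "k \<le> 1" and s: "s > 0" and tau: "\<tau> > 0"
  shows "((\<lambda>s. psi k \<tau> z s) has_real_derivative s * \<tau> * (psi (k+2) \<tau> z s - psi (k+1) \<tau> z s)) (at s)"
proof -
  define r where "r = sqrt \<tau>"
  have r: "r > 0" "\<tau> = r * r" using tau by (auto simp: r_def)
  define d where "d = (\<lambda>s. z / (s * r) - s * r / 2)"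
  have dd: "dd \<tau> z s' = d s'" for s' by (simp add: dd_def d_def r_def)
  have dder: "(d has_real_derivative (- z / (s^2 * r) - r/2)) (at s)"
    unfolding d_def using s r by (auto intro!: derivative_eq_intros simp: power2_eq_square field_simps)
  have hr: "he (Suc (Suc k)) (d s) = d s * he (Suc k) (d s) - real (Suc k) * he k (d s)"
    by (rule he_rec) (use k in simp)
  have rec1: "G (Suc (Suc k)) (d s) = d s * G (Suc k) (d s) - real (Suc k) * G k (d s)"
    unfolding G_def hr by (simp add: algebra_simps)
  have zq: "z = s * r * (d s + s * r / 2)" using s r by (simp add: d_def field_simps)
  have P2: "psi (k+2) \<tau> z s = (-1/(s * r))^(k+2) * G (k+2) (d s) / (s * r)"
    using psiG[OF s tau] by (simp add: dd r_def)
  have P1: "psi (k+1) \<tau> z s = (-1/(s * r))^(k+1) * G (k+1) (d s) / (s * r)"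
    using psiG[OF s tau] by (simp add: dd r_def)
  from k have "k = 0 \<or> k = 1" by auto
  then show ?thesis
  proof
    assume k0: "k = 0"
    have eq: "\<And>s'. s' \<in> {0<..} \<Longrightarrow> G 0 (d s') / (s' * r) = psi k \<tau> z s'"
      using psiG[OF _ tau] k0 by (simp add: dd r_def)
    have D: "((\<lambda>s. G 0 (d s) / (s * r)) has_real_derivative
        ((- G (Suc 0) (d s) * (- z / (s^2 * r) - r/2)) * (s * r) - G 0 (d s) * r) / (s * r)^2) (at s)"
      using s r by (auto intro!: derivative_eq_intros G_deriv dder simp: power2_eq_square)
    have V: "((- G (Suc 0) (d s) * (- z / (s^2 * r) - r/2)) * (s * r) - G 0 (d s) * r) / (s * r)^2
             = s * \<tau> * (psi (k+2) \<tau> z s - psi (k+1) \<tau> z s)"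
      unfolding P1 P2 unfolding k0 using rec1[unfolded k0] s r
      apply (simp add: zq)
      apply (simp add: field_simps power2_eq_square)
      done
    show ?thesis
      by (rule has_field_derivative_transform_within_open[OF D[unfolded V], of "{0<..}"]) (use s eq in auto)
  next
    assume k1: "k = 1"
    have eq: "\<And>s'. s' \<in> {0<..} \<Longrightarrow> - G 1 (d s') / (s' * r)^2 = psi k \<tau> z s'"
      using psiG[OF _ tau] k1 by (simp add: dd r_def power2_eq_square)
    have D: "((\<lambda>s. - G 1 (d s) / (s * r)^2) has_real_derivative
        (- (- G (Suc 1) (d s) * (- z / (s^2 * r) - r/2)) * (s * r)^2 - (- G 1 (d s)) * (2 * (s * r) * r)) / ((s * r)^2)^2) (at s)"
      using s r by (auto intro!: derivative_eq_intros G_deriv dder simp: power2_eq_square field_simps)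
    have V: "(- (- G (Suc 1) (d s) * (- z / (s^2 * r) - r/2)) * (s * r)^2 - (- G 1 (d s)) * (2 * (s * r) * r)) / ((s * r)^2)^2
             = s * \<tau> * (psi (k+2) \<tau> z s - psi (k+1) \<tau> z s)"
      unfolding P1 P2 unfolding k1 using rec1[unfolded k1] s r
      apply (simp add: zq)
      apply (simp add: field_simps power2_eq_square numeral_eq_Suc)
      done
    show ?thesis
      by (rule has_field_derivative_transform_within_open[OF D[unfolded V], of "{0<..}"]) (use s eq in auto)
  qed
qed



lemma int_poly:
  fixes T c0 c1 c2 c3 :: real
  assumes T: "T > 0" and f: "\<And>\<tau>. \<tau> \<in> {0<..<T} \<Longrightarrow> f \<tau> = c0 + c1 * \<tau> + c2 * \<tau>^2 + c3 * \<tau>^3"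
  shows "integral {0..T} f = c0 * T + c1 * T^2/2 + c2 * T^3/3 + c3 * T^4/4"
proof -
  define F where "F = (\<lambda>\<tau>::real. c0 * \<tau> + c1 * \<tau>^2/2 + c2 * \<tau>^3/3 + c3 * \<tau>^4/4)"
  have "((\<lambda>\<tau>. c0 + c1 * \<tau> + c2 * \<tau>^2 + c3 * \<tau>^3) has_integral (F T - F 0)) {0..T}"
  proof (rule fundamental_theorem_of_calculus)
    show "0 \<le> T" using T by simp
    fix x :: real
    show "(F has_vector_derivative c0 + c1 * x + c2 * x^2 + c3 * x^3) (at x within {0..T})"
      unfolding F_def has_real_derivative_iff_has_vector_derivative[symmetric]
      by (auto intro!: derivative_eq_intros simp: numeral_eq_Suc field_simps)
  qed
  moreover have "(f has_integral (F T - F 0)) {0..T} \<longleftrightarrow> ((\<lambda>\<tau>. c0 + c1 * \<tau> + c2 * \<tau>^2 + c3 * \<tau>^3) has_integral (F T - F 0)) {0..T}"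
    by (rule has_integral_spike_finite_eq[of "{0, T}"]) (auto simp: f)
  ultimately have "(f has_integral (F T - F 0)) {0..T}" by simp
  then show ?thesis by (simp add: F_def integral_unique)
qed

lemma dsig_u:
  assumes K: "K > 0" and tau: "\<tau> > 0" and s: "s > 0"
  shows "d_sig (heat_sg \<tau> (call_payoff K)) y s = s * \<tau> * K * psi 0 \<tau> (y - ln K) s"
  unfolding d_sig_def using DERIV_imp_deriv[OF heat_payoff_deriv[OF K s tau, of y]]
  by (simp add: psi_def)

lemma psi_dx_shift:
  assumes "k \<le> 3" "s > 0" "\<tau> > 0"
  shows "((\<lambda>y. psi k \<tau> (y - a) s) has_real_derivative psi (Suc k) \<tau> (y - a) s) (at y)"
proof -
  have "((\<lambda>y. psi k \<tau> (y - a) s) has_real_derivative psi (Suc k) \<tau> (y - a) s * (1 - 0)) (at y)"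
    by (rule DERIV_chain2[OF psi_dx[OF assms]]) (intro derivative_intros)
  then show ?thesis by simp
qed

lemma dx_psi0:
  assumes s: "s > 0" and tau: "\<tau> > 0" and that: "k \<le> 3"
  shows "deriv (\<lambda>y'. C * psi k \<tau> (y' - a) s) y = C * psi (Suc k) \<tau> (y - a) s"
proof -
  have "((\<lambda>y'. C * psi k \<tau> (y' - a) s) has_real_derivative C * psi (Suc k) \<tau> (y - a) s) (at y)"
    by (intro DERIV_cmult psi_dx_shift that s tau)
  then show ?thesis by (intro DERIV_imp_deriv)
qed

lemma L1_u:
  assumes K: "K > 0" and tau: "\<tau> > 0" and s: "s > 0"
  shows "L1_op \<rho> \<kappa> \<theta> (heat_sg \<tau> (call_payoff K)) y s =
     (\<kappa> * (\<theta> - s) * s * \<tau> * K) * psi 0 \<tau> (y - ln K) s + (\<rho> * s^3 * \<tau> * K) * psi 1 \<tau> (y - ln K) s"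
proof -
  have "d_x (d_sig (heat_sg \<tau> (call_payoff K))) y s = deriv (\<lambda>y'. (s * \<tau> * K) * psi 0 \<tau> (y' - ln K) s) y"
    unfolding d_x_def dsig_u[OF K tau s] by simp
  also have "\<dots> = (s * \<tau> * K) * psi 1 \<tau> (y - ln K) s"
    using dx_psi0[OF s tau, of 0] by simp
  finally show ?thesis unfolding L1_op_def dsig_u[OF K tau s]
    by (simp add: power2_eq_square power3_eq_cube algebra_simps)
qed

definition comb :: "real \<Rightarrow> real \<Rightarrow> real \<Rightarrow> real \<Rightarrow> real \<Rightarrow> real \<Rightarrow> real \<Rightarrow> real \<Rightarrow> real" where
  "comb c0 c1 c2 c3 c4 \<tau> z s = c0 * psi 0 \<tau> z s + c1 * psi 1 \<tau> z s + c2 * psi 2 \<tau> z s + c3 * psi 3 \<tau> z s + c4 * psi 4 \<tau> z s"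

lemma conv':
  assumes "k \<le> 4" "u > 0" "\<tau> > 0" "\<sigma> > 0"
  shows "has_bochner_integral lborel (\<lambda>y. c * (heat_kernel u (x - y) \<sigma> * psi k \<tau> (y - a) \<sigma>))
           (c * psi k (u + \<tau>) (x - a) \<sigma>)"
  by (intro has_bochner_integral_mult_right conv assms)

lemma heat_comb:
  assumes u: "u > 0" and tau: "\<tau> > 0" and sg: "\<sigma> > 0"
    and f: "\<And>y. f y \<sigma> = comb c0 c1 c2 c3 c4 \<tau> (y - a) \<sigma>"
  shows "heat_sg u f x \<sigma> = comb c0 c1 c2 c3 c4 (u + \<tau>) (x - a) \<sigma>"
proof -
  have I: "has_bochner_integral lborel (\<lambda>y. heat_kernel u (x - y) \<sigma> * comb c0 c1 c2 c3 c4 \<tau> (y - a) \<sigma>)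
      (comb c0 c1 c2 c3 c4 (u + \<tau>) (x - a) \<sigma>)"
    unfolding comb_def distrib_left
    by (intro has_bochner_integral_add conv'[OF _ u tau sg, simplified mult.left_commute[of _ "heat_kernel _ _ _"]]) auto
  show ?thesis using u unfolding heat_sg_def f by (simp add: has_bochner_integral_integral_eq[OF I])
qed

lemma dsig_comb:
  assumes tau: "\<tau> > 0" and sg: "\<sigma> > 0"
    and g: "\<And>s. s > 0 \<Longrightarrow> g y s = fa s * psi 0 \<tau> (y - a) s + fb s * psi 1 \<tau> (y - a) s"
    and d0: "(fa has_real_derivative fa') (at \<sigma>)" and d1: "(fb has_real_derivative fb') (at \<sigma>)"
  shows "d_sig g y \<sigma> = comb fa' (fb' - fa \<sigma> * \<sigma> * \<tau>) ((fa \<sigma> - fb \<sigma>) * \<sigma> * \<tau>) (fb \<sigma> * \<sigma> * \<tau>) 0 \<tau> (y - a) \<sigma>"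
proof -
  have D: "((\<lambda>s. fa s * psi 0 \<tau> (y - a) s + fb s * psi 1 \<tau> (y - a) s) has_real_derivative
     (fa' * psi 0 \<tau> (y - a) \<sigma> + fa \<sigma> * (\<sigma> * \<tau> * (psi (0+2) \<tau> (y - a) \<sigma> - psi (0+1) \<tau> (y - a) \<sigma>))
      + (fb' * psi 1 \<tau> (y - a) \<sigma> + fb \<sigma> * (\<sigma> * \<tau> * (psi (1+2) \<tau> (y - a) \<sigma> - psi (1+1) \<tau> (y - a) \<sigma>))))) (at \<sigma>)"
    by (auto intro!: derivative_eq_intros d0 d1 psi_ds[OF _ sg tau] simp: algebra_simps)
  have D': "((\<lambda>s. g y s) has_real_derivative
     (fa' * psi 0 \<tau> (y - a) \<sigma> + fa \<sigma> * (\<sigma> * \<tau> * (psi (0+2) \<tau> (y - a) \<sigma> - psi (0+1) \<tau> (y - a) \<sigma>))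
      + (fb' * psi 1 \<tau> (y - a) \<sigma> + fb \<sigma> * (\<sigma> * \<tau> * (psi (1+2) \<tau> (y - a) \<sigma> - psi (1+1) \<tau> (y - a) \<sigma>))))) (at \<sigma>)"
    by (rule has_field_derivative_transform_within_open[OF D, of "{0<..}"]) (use sg g in auto)
  show ?thesis unfolding d_sig_def DERIV_imp_deriv[OF D'] comb_def
    by (simp add: algebra_simps numeral_eq_Suc)
qed

lemma dx_comb:
  assumes tau: "\<tau> > 0" and sg: "\<sigma> > 0"
    and h: "\<And>y. h y \<sigma> = comb c0 c1 c2 c3 0 \<tau> (y - a) \<sigma>"
  shows "d_x h y \<sigma> = comb 0 c0 c1 c2 c3 \<tau> (y - a) \<sigma>"
proof -
  have D0: "((\<lambda>y. c0 * psi 0 \<tau> (y - a) \<sigma> + c1 * psi 1 \<tau> (y - a) \<sigma> + c2 * psi 2 \<tau> (y - a) \<sigma> + c3 * psi 3 \<tau> (y - a) \<sigma>) has_real_derivative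
      c0 * psi (Suc 0) \<tau> (y - a) \<sigma> + c1 * psi (Suc 1) \<tau> (y - a) \<sigma>
      + c2 * psi (Suc 2) \<tau> (y - a) \<sigma> + c3 * psi (Suc 3) \<tau> (y - a) \<sigma>) (at y)"
    by (intro DERIV_add DERIV_cmult psi_dx_shift sg tau) auto
  have e: "(\<lambda>y. comb c0 c1 c2 c3 0 \<tau> (y - a) \<sigma>) = (\<lambda>y. c0 * psi 0 \<tau> (y - a) \<sigma> + c1 * psi 1 \<tau> (y - a) \<sigma> + c2 * psi 2 \<tau> (y - a) \<sigma> + c3 * psi 3 \<tau> (y - a) \<sigma>)"
    by (simp add: comb_def)
  have D: "((\<lambda>y. comb c0 c1 c2 c3 0 \<tau> (y - a) \<sigma>) has_real_derivative
      c0 * psi (Suc 0) \<tau> (y - a) \<sigma> + c1 * psi (Suc 1) \<tau> (y - a) \<sigma>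
      + c2 * psi (Suc 2) \<tau> (y - a) \<sigma> + c3 * psi (Suc 3) \<tau> (y - a) \<sigma>) (at y)"
    unfolding e by (rule D0)
  show ?thesis unfolding d_x_def h DERIV_imp_deriv[OF D]
    by (simp add: comb_def numeral_eq_Suc)
qed

lemma deriv_gauss:
  assumes "n \<le> 4"
  shows "(deriv ^^ n) (\<lambda>u. exp (- (u^2) / 2)) = (\<lambda>u. (-1)^n * he n u * exp (- (u^2) / 2))"
  using assms
proof (induction n)
  case 0 then show ?case by simp
next
  case (Suc n)
  have en: "exp (- (u^2) / 2) = sqrt (2 * pi) * Nprime u" for u by (simp add: Nprime_def)
  have "((\<lambda>u. (-1)^n * he n u * exp (- (u^2) / 2)) has_real_derivative
         (-1)^(Suc n) * he (Suc n) u * exp (- (u^2) / 2)) (at u)" for u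
  proof -
    have "((\<lambda>u. (-1)^n * sqrt (2*pi) * (he n u * Nprime u)) has_real_derivative
         (-1)^n * sqrt (2*pi) * (- (he (Suc n) u * Nprime u))) (at u)"
      by (rule DERIV_cmult[OF he_N_deriv]) (use Suc in simp)
    then show ?thesis unfolding en by (simp add: algebra_simps)
  qed
  then have "deriv (\<lambda>u. (-1)^n * he n u * exp (- (u^2) / 2)) = (\<lambda>u. (-1)^(Suc n) * he (Suc n) u * exp (- (u^2) / 2))"
    by (intro ext DERIV_imp_deriv)
  then show ?case using Suc by simp
qed

lemma hermite_he:
  assumes "n \<le> 4" shows "hermite n z = he n z"
proof -
  have m: "(-1::real)^n * (-1)^n = 1" by (simp flip: power_mult_distrib)
  have e: "exp (z^2/2) * exp (- (z^2) / 2) = 1" by (simp flip: exp_add)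
  have "hermite n z = ((-1)^n * (-1)^n) * (exp (z^2/2) * exp (- (z^2) / 2)) * he n z"
    unfolding hermite_def deriv_gauss[OF assms] by (simp add: ac_simps)
  then show ?thesis unfolding m e by simp
qed



lemma F1_pt:
  assumes K: "K > 0" and sg: "\<sigma> > 0" and tau: "0 < \<tau>" "\<tau> < t"
  shows "heat_sg (t - \<tau>) (L1_op \<rho> \<kappa> \<theta> (heat_sg \<tau> (call_payoff K))) x \<sigma>
     = comb (\<kappa> * (\<theta> - \<sigma>) * \<sigma> * \<tau> * K) (\<rho> * \<sigma>^3 * \<tau> * K) 0 0 0 t (x - ln K) \<sigma>"
proof -
  have "heat_sg (t - \<tau>) (L1_op \<rho> \<kappa> \<theta> (heat_sg \<tau> (call_payoff K))) x \<sigma>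
     = comb (\<kappa> * (\<theta> - \<sigma>) * \<sigma> * \<tau> * K) (\<rho> * \<sigma>^3 * \<tau> * K) 0 0 0 ((t - \<tau>) + \<tau>) (x - ln K) \<sigma>"
    by (rule heat_comb) (use tau sg L1_u[OF K tau(1) sg] in \<open>auto simp: comb_def\<close>)
  then show ?thesis by simp
qed

lemma L2_pt:
  assumes K: "K > 0" and sg: "\<sigma> > 0" and tau: "0 < \<tau>" "\<tau> < t"
  shows "heat_sg (t - \<tau>) (L2_op (heat_sg \<tau> (call_payoff K))) x \<sigma>
     = comb (1/2 * \<sigma>^2 * \<tau> * K) (- 1/2 * \<sigma>^4 * \<tau>^2 * K) (1/2 * \<sigma>^4 * \<tau>^2 * K) 0 0 t (x - ln K) \<sigma>"
proof -
  have L2: "L2_op (heat_sg \<tau> (call_payoff K)) y \<sigma>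
       = comb (1/2 * \<sigma>^2 * \<tau> * K) (- 1/2 * \<sigma>^4 * \<tau>^2 * K) (1/2 * \<sigma>^4 * \<tau>^2 * K) 0 0 \<tau> (y - ln K) \<sigma>" for y
  proof -
    have "d_sig (d_sig (heat_sg \<tau> (call_payoff K))) y \<sigma>
        = comb (\<tau> * K) (0 - \<sigma> * \<tau> * K * \<sigma> * \<tau>) ((\<sigma> * \<tau> * K - 0) * \<sigma> * \<tau>) (0 * \<sigma> * \<tau>) 0 \<tau> (y - ln K) \<sigma>"
      by (rule dsig_comb[where fa="\<lambda>s. s * \<tau> * K" and fb="\<lambda>s. 0"])
         (use tau sg dsig_u[OF K tau(1)] in \<open>auto intro!: derivative_eq_intros\<close>)
    then show ?thesis unfolding L2_op_def
      by (simp only:) (simp add: comb_def algebra_simps power2_eq_square power4_eq_xxxx)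
  qed
  have "heat_sg (t - \<tau>) (L2_op (heat_sg \<tau> (call_payoff K))) x \<sigma>
     = comb (1/2 * \<sigma>^2 * \<tau> * K) (- 1/2 * \<sigma>^4 * \<tau>^2 * K) (1/2 * \<sigma>^4 * \<tau>^2 * K) 0 0 ((t - \<tau>) + \<tau>) (x - ln K) \<sigma>"
    by (rule heat_comb) (use tau sg L2 in auto)
  then show ?thesis by simp
qed

definition Qf :: "real \<Rightarrow> real \<Rightarrow> real \<Rightarrow> real \<Rightarrow> real \<Rightarrow> real \<Rightarrow> real \<Rightarrow> real \<Rightarrow> real" where
  "Qf K t \<rho> \<kappa> \<theta> x \<sigma> \<tau>1 =
    (let e0 = \<kappa> * (\<theta> - 2 * \<sigma>) * K;
         e1 = 3 * \<rho> * \<sigma>^2 * K - \<kappa> * (\<theta> - \<sigma>) * \<sigma>^2 * K * \<tau>1;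
         e2 = (\<kappa> * (\<theta> - \<sigma>) - \<rho> * \<sigma>^2) * \<sigma>^2 * K * \<tau>1;
         e3 = \<rho> * \<sigma>^4 * K * \<tau>1
     in comb (\<kappa> * (\<theta> - \<sigma>) * e0) (\<rho> * \<sigma>^2 * e0 + \<kappa> * (\<theta> - \<sigma>) * e1)
          (\<rho> * \<sigma>^2 * e1 + \<kappa> * (\<theta> - \<sigma>) * e2) (\<rho> * \<sigma>^2 * e2 + \<kappa> * (\<theta> - \<sigma>) * e3)
          (\<rho> * \<sigma>^2 * e3) t (x - ln K) \<sigma>)"

lemma S_pt:
  assumes K: "K > 0" and sg: "\<sigma> > 0" and tau: "0 < \<tau>2" "\<tau>2 < \<tau>1" "\<tau>1 < t"
  shows "heat_sg (t - \<tau>1) (L1_op \<rho> \<kappa> \<theta> (heat_sg (\<tau>1 - \<tau>2) (L1_op \<rho> \<kappa> \<theta> (heat_sg \<tau>2 (call_payoff K))))) x \<sigma>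
     = \<tau>2 * Qf K t \<rho> \<kappa> \<theta> x \<sigma> \<tau>1"
proof -
  define a where "a = ln K"
  define g where "g = heat_sg (\<tau>1 - \<tau>2) (L1_op \<rho> \<kappa> \<theta> (heat_sg \<tau>2 (call_payoff K)))"
  have t1: "\<tau>1 > 0" using tau by simp
  have gcl: "g y s = (\<kappa> * (\<theta> - s) * s * \<tau>2 * K) * psi 0 \<tau>1 (y - a) s + (\<rho> * s^3 * \<tau>2 * K) * psi 1 \<tau>1 (y - a) s"
    if s: "s > 0" for y s
  proof -
    have "g y s = comb (\<kappa> * (\<theta> - s) * s * \<tau>2 * K) (\<rho> * s^3 * \<tau>2 * K) 0 0 0 ((\<tau>1 - \<tau>2) + \<tau>2) (y - a) s"
      unfolding g_def
      by (rule heat_comb) (use tau s L1_u[OF K tau(1) s] in \<open>auto simp: comb_def a_def\<close>)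
    then show ?thesis by (simp add: comb_def)
  qed
  define e0 where "e0 = \<kappa> * (\<theta> - 2 * \<sigma>) * \<tau>2 * K"
  define e1 where "e1 = 3 * \<rho> * \<sigma>^2 * \<tau>2 * K - (\<kappa> * (\<theta> - \<sigma>) * \<sigma> * \<tau>2 * K) * \<sigma> * \<tau>1"
  define e2 where "e2 = ((\<kappa> * (\<theta> - \<sigma>) * \<sigma> * \<tau>2 * K) - (\<rho> * \<sigma>^3 * \<tau>2 * K)) * \<sigma> * \<tau>1"
  define e3 where "e3 = (\<rho> * \<sigma>^3 * \<tau>2 * K) * \<sigma> * \<tau>1"
  have dg: "d_sig g y \<sigma> = comb e0 e1 e2 e3 0 \<tau>1 (y - a) \<sigma>" for y
    unfolding e0_def e1_def e2_def e3_def
    by (rule dsig_comb[where fa="\<lambda>s. \<kappa> * (\<theta> - s) * s * \<tau>2 * K" and fb="\<lambda>s. \<rho> * s^3 * \<tau>2 * K"])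
       (use t1 sg gcl in \<open>auto intro!: derivative_eq_intros simp: algebra_simps power2_eq_square\<close>)
  have dxg: "d_x (d_sig g) y \<sigma> = comb 0 e0 e1 e2 e3 \<tau>1 (y - a) \<sigma>" for y
    by (rule dx_comb) (use t1 sg dg in auto)
  have L1g: "L1_op \<rho> \<kappa> \<theta> g y \<sigma> = comb (\<kappa> * (\<theta> - \<sigma>) * e0) (\<rho> * \<sigma>^2 * e0 + \<kappa> * (\<theta> - \<sigma>) * e1)
          (\<rho> * \<sigma>^2 * e1 + \<kappa> * (\<theta> - \<sigma>) * e2) (\<rho> * \<sigma>^2 * e2 + \<kappa> * (\<theta> - \<sigma>) * e3)
          (\<rho> * \<sigma>^2 * e3) \<tau>1 (y - a) \<sigma>" for y
    unfolding L1_op_def dxg dg by (simp add: comb_def algebra_simps)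
  have "heat_sg (t - \<tau>1) (L1_op \<rho> \<kappa> \<theta> g) x \<sigma> = comb (\<kappa> * (\<theta> - \<sigma>) * e0) (\<rho> * \<sigma>^2 * e0 + \<kappa> * (\<theta> - \<sigma>) * e1)
          (\<rho> * \<sigma>^2 * e1 + \<kappa> * (\<theta> - \<sigma>) * e2) (\<rho> * \<sigma>^2 * e2 + \<kappa> * (\<theta> - \<sigma>) * e3)
          (\<rho> * \<sigma>^2 * e3) ((t - \<tau>1) + \<tau>1) (x - a) \<sigma>"
    by (rule heat_comb) (use tau sg L1g in auto)
  also have "\<dots> = \<tau>2 * Qf K t \<rho> \<kappa> \<theta> x \<sigma> \<tau>1"
    unfolding Qf_def Let_def e0_def e1_def e2_def e3_def a_def
    by (simp add: comb_def algebra_simps power2_eq_square power3_eq_cube power4_eq_xxxx)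
  finally show ?thesis unfolding g_def .
qed



lemma sum4: "(\<Sum>i\<le>4. f i) = f 0 + f 1 + f 2 + f 3 + (f (4::nat) :: real)"
  by (simp add: eval_nat_numeral)

theorem mainTheorem3:
  fixes K t \<rho> \<kappa>0 \<theta> x \<sigma> :: real
  assumes "K > 0" and "t > 0" and "\<sigma> > 0"
  shows "F1 K t \<rho> \<kappa>0 \<theta> x \<sigma> =
           K * t / 2 * (\<kappa>0 * (\<theta> - \<sigma>) * sqrt t - \<rho> * \<sigma> * d_minus K t x \<sigma>)
             * Nprime (d_minus K t x \<sigma>)
       \<and> F2 K t \<rho> \<kappa>0 \<theta> x \<sigma> =
           K * (\<Sum>i\<le>4. a2 t \<rho> \<kappa>0 \<theta> \<sigma> i * (- 1 / (\<sigma> * sqrt t))^i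
                  * hermite i (d_minus K t x \<sigma>) * Nprime (d_minus K t x \<sigma>) / (\<sigma> * sqrt t))"
proof -
  note K = assms(1) and t = assms(2) and sg = assms(3)
  define P where "P k = psi k t (x - ln K) \<sigma>" for k
  define dm where "dm = d_minus K t x \<sigma>"
  define st where "st = sqrt t"
  have st: "st > 0" "t = st * st" using t by (auto simp: st_def)
  have Pk: "P k = (-1 / (\<sigma> * st))^k * he k dm * Nprime dm / (\<sigma> * st)" for k
    unfolding P_def psiG[OF sg t] G_def dd_def dm_def d_minus_def st_def by simp
  have Ph: "(- 1 / (\<sigma> * sqrt t))^i * hermite i (d_minus K t x \<sigma>) * Nprime (d_minus K t x \<sigma>) / (\<sigma> * sqrt t) = P i"
    if "i \<le> 4" for i
    unfolding Pk hermite_he[OF that] dm_def st_def by simp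
  have combP: "comb c0 c1 c2 c3 c4 t (x - ln K) \<sigma> = c0 * P 0 + c1 * P 1 + c2 * P 2 + c3 * P 3 + c4 * P 4"
    for c0 c1 c2 c3 c4 by (simp add: comb_def P_def)
  have F1v: "F1 K t \<rho> \<kappa>0 \<theta> x \<sigma> = (\<kappa>0 * (\<theta> - \<sigma>) * \<sigma> * K * P 0 + \<rho> * \<sigma>^3 * K * P 1) * t^2 / 2"
  proof -
    have "F1 K t \<rho> \<kappa>0 \<theta> x \<sigma> = 0 * t + (\<kappa>0 * (\<theta> - \<sigma>) * \<sigma> * K * P 0 + \<rho> * \<sigma>^3 * K * P 1) * t^2 / 2 + 0 * t^3/3 + 0 * t^4/4"
      unfolding F1_def
      by (rule int_poly[OF t]) (simp add: F1_pt[OF K sg] combP algebra_simps)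
    then show ?thesis by simp
  qed
  have part1: "F1 K t \<rho> \<kappa>0 \<theta> x \<sigma> =
           K * t / 2 * (\<kappa>0 * (\<theta> - \<sigma>) * sqrt t - \<rho> * \<sigma> * d_minus K t x \<sigma>)
             * Nprime (d_minus K t x \<sigma>)"
    unfolding F1v Pk dm_def[symmetric] st_def[symmetric] using st sg
    by (simp add: field_simps power2_eq_square power3_eq_cube)
  have I1: "integral {0..t} (\<lambda>\<tau>1. heat_sg (t - \<tau>1) (L2_op (heat_sg \<tau>1 (call_payoff K))) x \<sigma>)
      = 0 * t + (1/2 * \<sigma>^2 * K * P 0) * t^2/2 + (1/2 * \<sigma>^4 * K * (P 2 - P 1)) * t^3/3 + 0 * t^4/4"
    by (rule int_poly[OF t]) (simp add: L2_pt[OF K sg] combP field_simps power2_eq_square)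
  define Q0 where "Q0 = Qf K t \<rho> \<kappa>0 \<theta> x \<sigma> 0"
  define Q1 where "Q1 = Qf K t \<rho> \<kappa>0 \<theta> x \<sigma> 1 - Qf K t \<rho> \<kappa>0 \<theta> x \<sigma> 0"
  have Qaff: "Qf K t \<rho> \<kappa>0 \<theta> x \<sigma> \<tau>1 = Q0 + Q1 * \<tau>1" for \<tau>1
    unfolding Q0_def Q1_def Qf_def Let_def comb_def by (simp add: algebra_simps)
  have inner: "integral {0..\<tau>1} (\<lambda>\<tau>2. heat_sg (t - \<tau>1) (L1_op \<rho> \<kappa>0 \<theta> (heat_sg (\<tau>1 - \<tau>2)
             (L1_op \<rho> \<kappa>0 \<theta> (heat_sg \<tau>2 (call_payoff K))))) x \<sigma>)
       = 0 * \<tau>1 + Qf K t \<rho> \<kappa>0 \<theta> x \<sigma> \<tau>1 * \<tau>1^2/2 + 0 * \<tau>1^3/3 + 0 * \<tau>1^4/4"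
    if "\<tau>1 \<in> {0<..<t}" for \<tau>1
    by (rule int_poly) (use that in \<open>auto simp: S_pt[OF K sg]\<close>)
  have I2: "integral {0..t} (\<lambda>\<tau>1. integral {0..\<tau>1} (\<lambda>\<tau>2. heat_sg (t - \<tau>1) (L1_op \<rho> \<kappa>0 \<theta> (heat_sg (\<tau>1 - \<tau>2)
             (L1_op \<rho> \<kappa>0 \<theta> (heat_sg \<tau>2 (call_payoff K))))) x \<sigma>))
      = 0 * t + 0 * t^2/2 + (Q0/2) * t^3/3 + (Q1/2) * t^4/4"
    by (rule int_poly[OF t]) (simp add: inner Qaff algebra_simps power2_eq_square power3_eq_cube)
  have part2: "F2 K t \<rho> \<kappa>0 \<theta> x \<sigma> =
           K * (\<Sum>i\<le>4. a2 t \<rho> \<kappa>0 \<theta> \<sigma> i * (- 1 / (\<sigma> * sqrt t))^i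
                  * hermite i (d_minus K t x \<sigma>) * Nprime (d_minus K t x \<sigma>) / (\<sigma> * sqrt t))"
  proof -
    have "(\<Sum>i\<le>4. a2 t \<rho> \<kappa>0 \<theta> \<sigma> i * (- 1 / (\<sigma> * sqrt t))^i
                  * hermite i (d_minus K t x \<sigma>) * Nprime (d_minus K t x \<sigma>) / (\<sigma> * sqrt t))
        = (\<Sum>i\<le>4. a2 t \<rho> \<kappa>0 \<theta> \<sigma> i * P i)"
      by (rule sum.cong) (use Ph in \<open>auto simp: mult.assoc simp flip: Ph\<close>)
    moreover have "F2 K t \<rho> \<kappa>0 \<theta> x \<sigma> = K * (\<Sum>i\<le>4. a2 t \<rho> \<kappa>0 \<theta> \<sigma> i * P i)"
      unfolding F2_def I1 I2 sum4 Q0_def Q1_def Qf_def Let_def combP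
      by (simp add: a2_def eval_nat_numeral field_simps)
    ultimately show ?thesis by simp
  qed
  show ?thesis using part1 part2 by simp
qed

end
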